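(* Let $N,L,s$ be positive integers with $s\le L$, let $\mathbf{D}\in\mathbb{R}^{N\times N}$ and $\mathbf{H}\in\mathbb{R}^{N\times L}$, and consider the discrete-time linear system $\mathbf{x}_k=\mathbf{D}\mathbf{x}_{k-1}+\mathbf{H}\mathbf{h}_k$ with state $\mathbf{x}_k\in\mathbb{R}^N$ and inputs $\mathbf{h}_k\in\mathbb{R}^L$ constrained to satisfy $\|\mathbf{h}_k\|_0\le s$. Let $R_{\mathbf{D}}=\operatorname{rank}(\mathbf{D})$. Then the system is $s$-sparse-controllable if and only if $$\operatorname{rank}\begin{bmatrix}\lambda\mathbf{I}-\mathbf{D} & \mathbf{H}\end{bmatrix}=N\ \text{ for all }\lambda\in\mathbb{C},\qquad\text{and}\qquad N\le s+R_{\mathbf{D}}.$$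
   Context: $\|\cdot\|_0$ denotes the number of nonzero entries of a vector. The system is called $s$-sparse-controllable if for every initial state $\mathbf{x}_0=\mathbf{x}_{\mathrm{init}}\in\mathbb{R}^N$ and every final state $\mathbf{x}_{\mathrm{final}}\in\mathbb{R}^N$ there exist a finite $K$ and inputs $\mathbf{h}_1,\dots,\mathbf{h}_K\in\mathbb{R}^L$ with $\|\mathbf{h}_k\|_0\le s$ for all $k$ that steer the system from $\mathbf{x}_0=\mathbf{x}_{\mathrm{init}}$ to $\mathbf{x}_K=\mathbf{x}_{\mathrm{final}}$. *)

theory Defs
  imports "HOL-Analysis.Analysis"
begin

text \<open>Number of nonzero entries of a vector (the l0 "norm").\<close>
definition l0_norm :: "real^'l \<Rightarrow> nat" where
  "l0_norm h = card {i. h $ i \<noteq> 0}"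

text \<open>State of the system x_k = D x_{k-1} + H h_k after k steps, starting at x0,
  with input sequence h (only h 1, h 2, ... are used).\<close>
fun sys_state :: "real^'n^'n \<Rightarrow> real^'l^'n \<Rightarrow> real^'n \<Rightarrow> (nat \<Rightarrow> real^'l) \<Rightarrow> nat \<Rightarrow> real^'n" where
  "sys_state D H x0 h 0 = x0"
| "sys_state D H x0 h (Suc k) = D *v sys_state D H x0 h k + H *v h (Suc k)"

definition s_sparse_controllable :: "real^'n^'n \<Rightarrow> real^'l^'n \<Rightarrow> nat \<Rightarrow> bool" where
  "s_sparse_controllable D H s \<longleftrightarrow>
     (\<forall>x_init x_final. \<exists>K h. (\<forall>k\<in>{1..K}. l0_norm (h k) \<le> s) \<and>
                              sys_state D H x_init h K = x_final)"

text \<open>The complex N x (N+L) block matrix [lambda I - D, H]; columns indexed by 'n + 'l.\<close>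
definition pbh_matrix :: "complex \<Rightarrow> real^'n^'n \<Rightarrow> real^'l^'n \<Rightarrow> complex^('n + 'l)^'n" where
  "pbh_matrix lam D H = (\<chi> i j. case j of
        Inl j' \<Rightarrow> (if i = j' then lam else 0) - complex_of_real (D $ i $ j')
      | Inr j' \<Rightarrow> complex_of_real (H $ i $ j'))"

end

theory Submission
  imports Defs "HOL-Computational_Algebra.Fundamental_Theorem_Algebra"
begin


definition dp :: "real^'n^'n \<Rightarrow> nat \<Rightarrow> real^'n \<Rightarrow> real^'n" where
  "dp D k = ((*v) D) ^^ k"

lemma dp_0[simp]: "dp D 0 x = x" by (simp add: dp_def)
lemma dp_Suc: "dp D (Suc k) x = D *v dp D k x" by (simp add: dp_def)
lemma dp_Suc': "dp D (Suc k) x = dp D k (D *v x)" by (simp only: dp_def funpow_Suc_right comp_def)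
lemma dp_add: "dp D (a + b) x = dp D a (dp D b x)" by (simp add: dp_def funpow_add)

lemma linear_dp: "linear (dp D k)"
proof (induction k)
  case 0 then show ?case by (simp add: dp_def linear_id[unfolded id_def])
next
  case (Suc k)
  have "dp D (Suc k) = (*v) D \<circ> dp D k" by (auto simp: dp_Suc)
  then show ?case using linear_compose[OF Suc matrix_vector_mul_linear, of D] by (simp only:)
qed

lemma state_formula:
  "sys_state D H x0 h K = dp D K x0 + (\<Sum>m<K. dp D m (H *v h (K - m)))"
proof (induction K)
  case 0 then show ?case by simp
next
  case (Suc K)
  have lin: "linear ((*v) D)" by (rule matrix_vector_mul_linear)
  have "sys_state D H x0 h (Suc K) = D *v (dp D K x0 + (\<Sum>m<K. dp D m (H *v h (K - m)))) + H *v h (Suc K)"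
    using Suc by simp
  also have "\<dots> = dp D (Suc K) x0 + (\<Sum>m<K. dp D (Suc m) (H *v h (K - m))) + H *v h (Suc K)"
    by (simp add: linear_add[OF lin] linear_sum[OF lin] dp_Suc)
  also have "\<dots> = dp D (Suc K) x0 + (\<Sum>m<Suc K. dp D m (H *v h (Suc K - m)))"
    unfolding sum.lessThan_Suc_shift by simp
  finally show ?case .
qed

lemma span_param:
  fixes f :: "'p \<Rightarrow> 'v::real_vector"
  assumes "finite P" "y \<in> span (f ` P)"
  shows "\<exists>c. y = (\<Sum>p\<in>P. c p *\<^sub>R f p)"
proof -
  let ?S = "{y. \<exists>c. y = (\<Sum>p\<in>P. c p *\<^sub>R f p)}"
  have sub: "subspace ?S"
    unfolding subspace_def
  proof (intro conjI ballI allI)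
    show "0 \<in> ?S" by (rule CollectI, rule exI[of _ "\<lambda>_. 0"]) simp
  next
    fix x y assume "x \<in> ?S" "y \<in> ?S"
    then obtain c1 c2 where "x = (\<Sum>p\<in>P. c1 p *\<^sub>R f p)" "y = (\<Sum>p\<in>P. c2 p *\<^sub>R f p)" by blast
    then show "x + y \<in> ?S"
      by (intro CollectI exI[of _ "\<lambda>p. c1 p + c2 p"]) (simp add: sum.distrib scaleR_add_left)
  next
    fix r x assume "x \<in> ?S"
    then obtain c1 where "x = (\<Sum>p\<in>P. c1 p *\<^sub>R f p)" by blast
    then show "r *\<^sub>R x \<in> ?S"
      by (intro CollectI exI[of _ "\<lambda>p. r * c1 p"]) (simp add: scaleR_sum_right)
  qed
  have "f ` P \<subseteq> ?S"
  proof
    fix x assume "x \<in> f ` P"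
    then obtain q where q: "q \<in> P" "x = f q" by auto
    show "x \<in> ?S"
    proof (intro CollectI exI[of _ "\<lambda>p. if p = q then 1 else 0"])
      have "(\<Sum>p\<in>P. (if p = q then 1 else 0) *\<^sub>R f p) = (\<Sum>p\<in>P. if p = q then f p else 0)"
        by (rule sum.cong) auto
      also have "\<dots> = f q" using q assms(1) by (simp add: sum.delta')
      finally show "x = (\<Sum>p\<in>P. (if p = q then 1 else 0) *\<^sub>R f p)" using q by simp
    qed
  qed
  then have "span (f ` P) \<subseteq> ?S" using sub span_minimal by blast
  then show ?thesis using assms(2) by blast
qed

lemma plan_controllable:
  fixes D :: "real^'n^'n" and H :: "real^'l^'n" and s :: nat
  assumes finP: "finite P" and cardP: "\<forall>m. card {j. (m,j) \<in> P} \<le> s"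
    and spP: "span ((\<lambda>(m,j). dp D m (column j H)) ` P) = UNIV"
  shows "s_sparse_controllable D H s"
  unfolding s_sparse_controllable_def
proof (intro allI)
  fix x_init x_final :: "real^'n"
  let ?gg = "\<lambda>(m,j). dp D m (column j H)"
  obtain K where K: "fst ` P \<subseteq> {..<K}" using finite_nat_bounded finP by blast
  then have PK: "P \<subseteq> {..<K} \<times> UNIV" by force
  obtain c where c: "x_final - dp D K x_init = (\<Sum>p\<in>P. c p *\<^sub>R ?gg p)"
    using span_param[OF finP, of "x_final - dp D K x_init" ?gg] spP by auto
  define hv where "hv m = (\<chi> j. if (m,j) \<in> P then c (m,j) else 0)" for m
  define h where "h k = hv (K - k)" for k
  have l0: "l0_norm (h k) \<le> s" for k
  proof -
    have "{i. h k $ i \<noteq> 0} \<subseteq> {j. (K - k, j) \<in> P}" by (auto simp: h_def hv_def)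
    then have "l0_norm (h k) \<le> card {j. (K - k, j) \<in> P}" unfolding l0_norm_def
      by (intro card_mono) auto
    then show ?thesis using cardP by (meson order_trans)
  qed
  have Hv: "dp D m (H *v hv m) = (\<Sum>j\<in>UNIV. (if (m,j) \<in> P then c (m,j) *\<^sub>R ?gg (m,j) else 0))" for m
  proof -
    have "H *v hv m = (\<Sum>j\<in>UNIV. (hv m $ j) *\<^sub>R column j H)"
      by (simp add: matrix_mult_sum scalar_mult_eq_scaleR)
    then have "dp D m (H *v hv m) = (\<Sum>j\<in>UNIV. (hv m $ j) *\<^sub>R dp D m (column j H))"
      by (simp add: linear_sum[OF linear_dp] linear_scale[OF linear_dp])
    then show ?thesis by (auto simp: hv_def intro!: sum.cong)
  qed
  have "sys_state D H x_init h K = dp D K x_init + (\<Sum>m<K. dp D m (H *v hv m))"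
    unfolding state_formula h_def by (auto intro!: sum.cong)
  also have "(\<Sum>m<K. dp D m (H *v hv m)) = (\<Sum>m<K. \<Sum>j\<in>UNIV. (if (m,j) \<in> P then c (m,j) *\<^sub>R ?gg (m,j) else 0))"
    using Hv by simp
  also have "\<dots> = (\<Sum>p\<in>{..<K} \<times> UNIV. (if p \<in> P then c p *\<^sub>R ?gg p else 0))"
    by (subst sum.cartesian_product) (rule sum.cong, auto)
  also have "\<dots> = (\<Sum>p\<in>({..<K} \<times> UNIV) \<inter> P. c p *\<^sub>R ?gg p)"
    by (simp add: sum.inter_restrict)
  also have "({..<K} \<times> UNIV) \<inter> P = P" using PK by blast
  finally have "sys_state D H x_init h K = x_final" using c by (metis add.commute diff_add_cancel)
  then show "\<exists>K h. (\<forall>k\<in>{1..K}. l0_norm (h k) \<le> s) \<and> sys_state D H x_init h K = x_final"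
    using l0 by blast
qed



lemma span_sub_span: "X \<subseteq> span Y \<Longrightarrow> span X \<subseteq> span Y"
  using span_minimal subspace_span by blast

lemma plan_exists:
  fixes D :: "real^'n^'n" and H :: "real^'l^'n" and s :: nat
  assumes kry: "span {dp D m (column j H) | m j. True} = UNIV"
    and s1: "1 \<le> s" and rk: "CARD('n) \<le> s + rank D"
  shows "\<exists>P. finite P \<and> (\<forall>m. card {j. (m,j) \<in> P} \<le> s) \<and>
             span ((\<lambda>(m,j). dp D m (column j H)) ` P) = UNIV"
proof -
  define R where "R k = range (dp D k)" for k
  define gg where "gg = (\<lambda>(m,j). dp D m (column j H))"
  have subR: "subspace (R k)" for k
    unfolding R_def by (rule linear_subspace_image[OF linear_dp subspace_UNIV])
  have spanR: "span (R k) = R k" for k using subR span_eq_iff by blast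
  have RE: "R k = span {dp D (k+m) (column j H) | m j. True}" for k
  proof -
    have "R k = dp D k ` span {dp D m (column j H) | m j. True}"
      unfolding R_def kry ..
    also have "\<dots> = span (dp D k ` {dp D m (column j H) | m j. True})"
      by (simp add: linear_span_image[OF linear_dp])
    also have "dp D k ` {dp D m (column j H) | m j. True} = {dp D (k+m) (column j H) | m j. True}"
      by (auto simp: dp_add)
    finally show ?thesis .
  qed
  have R1: "span (R 1 \<union> range (\<lambda>j. column j H)) = UNIV"
  proof -
    have "{dp D m (column j H) | m j. True} \<subseteq> R 1 \<union> range (\<lambda>j. column j H)"
    proof
      fix y assume "y \<in> {dp D m (column j H) | m j. True}"
      then obtain m j where y: "y = dp D m (column j H)" by blast
      show "y \<in> R 1 \<union> range (\<lambda>j. column j H)"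
      proof (cases m)
        case 0 then show ?thesis using y by simp
      next
        case (Suc m')
        then have "y = dp D 1 (dp D m' (column j H))"
          using dp_add[of D 1 m'] y by simp
        then show ?thesis unfolding R_def by auto
      qed
    qed
    then have "UNIV \<subseteq> span (R 1 \<union> range (\<lambda>j. column j H))"
      using kry span_mono by blast
    then show ?thesis by blast
  qed
  have dimR1: "dim (R 1) = rank D"
  proof -
    have "R 1 = range (\<lambda>x. D *v x)" unfolding R_def by (simp add: dp_Suc)
    then show ?thesis by (simp add: rank_dim_range)
  qed
  obtain T0 where T0card: "card T0 \<le> s" and T0span: "span (R 1 \<union> (\<lambda>j. column j H) ` T0) = UNIV"
  proof -
    obtain B1 where B1: "B1 \<subseteq> R 1" "independent B1" "R 1 \<subseteq> span B1" "card B1 = dim (R 1)"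
      using basis_exists by blast
    obtain B where B: "B1 \<subseteq> B" "B \<subseteq> B1 \<union> range (\<lambda>j. column j H)" "independent B"
      "B1 \<union> range (\<lambda>j. column j H) \<subseteq> span B"
      using maximal_independent_subset_extend[of B1 "B1 \<union> range (\<lambda>j. column j H)"] B1(2) by blast
    have "R 1 \<union> range (\<lambda>j. column j H) \<subseteq> span B"
      using B1(3) B(1,4) span_mono by blast
    then have spB: "span B = UNIV" using R1 span_sub_span[of "R 1 \<union> range (\<lambda>j. column j H)" B] by auto
    have finB: "finite B" using independent_bound B(3) by blast
    have cardB: "card B = CARD('n)"
      using dim_span_eq_card_independent[OF B(3)] spB by simp
    have fB1: "finite B1" using finB B(1) finite_subset by blast
    have cd: "card (B - B1) = CARD('n) - rank D"
      using card_Diff_subset[OF fB1 B(1)] cardB B1(4) dimR1 by simp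
    have "B - B1 \<subseteq> (\<lambda>j. column j H) ` UNIV" using B(2) by blast
    then obtain T where T: "inj_on (\<lambda>j. column j H) T" "B - B1 = (\<lambda>j. column j H) ` T"
      using subset_image_inj by metis
    have "card T = card (B - B1)" using T card_image by metis
    then have "card T \<le> s" using cd rk by linarith
    moreover have "span (R 1 \<union> (\<lambda>j. column j H) ` T) = UNIV"
    proof -
      have "B \<subseteq> R 1 \<union> (\<lambda>j. column j H) ` T" using B1(1) T(2) by blast
      then have "span B \<subseteq> span (R 1 \<union> (\<lambda>j. column j H) ` T)" by (rule span_mono)
      then show ?thesis using spB by auto
    qed
    ultimately show ?thesis using that by blast
  qed
  define A where "A k = {dp D m (column j H) | m j. m < k \<and> j \<in> T0}" for k
  have Astep: "span (A k \<union> R k) = UNIV" for k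
  proof (induction k)
    case 0
    have "R 0 = UNIV" unfolding R_def by (simp add: dp_def)
    then show ?case by simp
  next
    case (Suc k)
    have key: "R k \<subseteq> span (A (Suc k) \<union> R (Suc k))"
    proof -
      have "R k = dp D k ` span (R 1 \<union> (\<lambda>j. column j H) ` T0)"
        by (simp only: T0span) (simp add: R_def)
      also have "\<dots> = span (dp D k ` (R 1 \<union> (\<lambda>j. column j H) ` T0))"
        by (simp add: linear_span_image[OF linear_dp])
      also have "\<dots> \<subseteq> span (A (Suc k) \<union> R (Suc k))"
      proof (rule span_mono)
        show "dp D k ` (R 1 \<union> (\<lambda>j. column j H) ` T0) \<subseteq> A (Suc k) \<union> R (Suc k)"
        proof
          fix y assume "y \<in> dp D k ` (R 1 \<union> (\<lambda>j. column j H) ` T0)"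
          then consider x where "y = dp D k (dp D 1 x)" | j where "j \<in> T0" "y = dp D k (column j H)"
            unfolding R_def by blast
          then show "y \<in> A (Suc k) \<union> R (Suc k)"
          proof cases
            case 1
            then have "y = dp D (Suc k) x" using dp_add[of D k 1] by simp
            then show ?thesis unfolding R_def by blast
          next
            case 2 then show ?thesis unfolding A_def by blast
          qed
        qed
      qed
      finally show ?thesis .
    qed
    have "A k \<subseteq> A (Suc k)" unfolding A_def by fastforce
    then have "A k \<union> R k \<subseteq> span (A (Suc k) \<union> R (Suc k))"
      using key span_superset by blast
    then have "span (A k \<union> R k) \<subseteq> span (A (Suc k) \<union> R (Suc k))" by (rule span_sub_span)
    then show ?case using Suc by auto
  qed
  obtain k0 where k0: "\<And>k. dim (R k0) \<le> dim (R k)"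
    using ex_has_least_nat[of "\<lambda>_. True" 0 "\<lambda>k. dim (R k)"] by blast
  have stab: "R k = R k0" if "k0 \<le> k" for k
  proof -
    have "R k \<subseteq> R k0"
    proof
      fix y assume "y \<in> R k"
      then obtain x where "y = dp D k x" unfolding R_def by blast
      then have "y = dp D k0 (dp D (k - k0) x)" using dp_add[of D k0 "k - k0"] that by simp
      then show "y \<in> R k0" unfolding R_def by blast
    qed
    then show ?thesis using subspace_dim_equal[OF subR subR] k0 by blast
  qed
  have greedy: "\<And>P E. finite P \<Longrightarrow> (\<forall>p\<in>P. fst p < E) \<Longrightarrow> k0 \<le> E \<Longrightarrow>
      (\<forall>m. card {j. (m,j) \<in> P} \<le> s) \<Longrightarrow> span (gg ` P \<union> R k0) = UNIV \<Longrightarrow>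
      CARD('n) - dim (gg ` P) \<le> n \<Longrightarrow>
      \<exists>P'. finite P' \<and> (\<forall>m. card {j. (m,j) \<in> P'} \<le> s) \<and> span (gg ` P') = UNIV" for n
  proof (induction n)
    case 0
    then have "dim (gg ` P) = DIM(real^'n)" using dim_subset_UNIV[of "gg ` P"] by simp
    then have "span (gg ` P) = UNIV" using dim_eq_full by blast
    then show ?case using 0 by blast
  next
    case (Suc n)
    show ?case
    proof (cases "span (gg ` P) = UNIV")
      case True then show ?thesis using Suc.prems by blast
    next
      case False
      have "\<exists>m j. E \<le> m \<and> gg (m,j) \<notin> span (gg ` P)"
      proof (rule ccontr)
        assume "\<not> ?thesis"
        then have all: "\<And>m j. E \<le> m \<Longrightarrow> gg (m,j) \<in> span (gg ` P)" by blast
        have "{dp D (E+m) (column j H) | m j. True} \<subseteq> span (gg ` P)"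
        proof
          fix y assume "y \<in> {dp D (E+m) (column j H) | m j. True}"
          then obtain m j where "y = dp D (E+m) (column j H)" by blast
          then have "y = gg (E+m, j)" unfolding gg_def by simp
          then show "y \<in> span (gg ` P)" using all[of "E+m" j] by simp
        qed
        then have "R E \<subseteq> span (gg ` P)" unfolding RE by (rule span_sub_span)
        moreover have "R E = R k0" using stab[OF Suc.prems(3)] .
        ultimately have "R k0 \<subseteq> span (gg ` P)" by simp
        then have "gg ` P \<union> R k0 \<subseteq> span (gg ` P)" using span_superset by blast
        then have "span (gg ` P \<union> R k0) \<subseteq> span (gg ` P)" by (rule span_sub_span)
        then show False using False Suc.prems(5) by auto
      qed
      then obtain m j where mj: "E \<le> m" "gg (m,j) \<notin> span (gg ` P)" by blast
      define P' where "P' = insert (m,j) P"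
      have f': "finite P'" using Suc.prems(1) by (simp add: P'_def)
      have e': "\<forall>p\<in>P'. fst p < Suc m" using Suc.prems(2) mj(1) by (auto simp: P'_def)
      have k': "k0 \<le> Suc m" using Suc.prems(3) mj(1) by simp
      have c': "\<forall>m'. card {j'. (m',j') \<in> P'} \<le> s"
      proof
        fix m'
        show "card {j'. (m',j') \<in> P'} \<le> s"
        proof (cases "m' = m")
          case True
          have "{j'. (m',j') \<in> P'} = {j}"
            using Suc.prems(2) mj(1) True by (auto simp: P'_def)
          then show ?thesis using s1 by simp
        next
          case False
          then have "{j'. (m',j') \<in> P'} = {j'. (m',j') \<in> P}" by (auto simp: P'_def)
          then show ?thesis using Suc.prems(4) by simp
        qed
      qed
      have sp': "span (gg ` P' \<union> R k0) = UNIV"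
      proof -
        have "span (gg ` P \<union> R k0) \<subseteq> span (gg ` P' \<union> R k0)"
          by (rule span_mono) (auto simp: P'_def)
        then show ?thesis using Suc.prems(5) by auto
      qed
      have "dim (gg ` P') = dim (gg ` P) + 1"
        using mj(2) by (simp add: P'_def dim_insert)
      then have d': "CARD('n) - dim (gg ` P') \<le> n" using Suc.prems(6) by simp
      show ?thesis using Suc.IH[OF f' e' k' c' sp' d'] .
    qed
  qed
  define P0 where "P0 = {..<k0} \<times> T0"
  have finT0: "finite T0" by simp
  have "gg ` P0 = A k0" unfolding gg_def P0_def A_def by auto
  then have sp0: "span (gg ` P0 \<union> R k0) = UNIV" using Astep by simp
  have c0: "\<forall>m. card {j. (m,j) \<in> P0} \<le> s"
  proof
    fix m
    have "{j. (m,j) \<in> P0} \<subseteq> T0" unfolding P0_def by auto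
    then show "card {j. (m,j) \<in> P0} \<le> s" using T0card card_mono[OF finT0] by (meson order_trans)
  qed
  have "finite P0" unfolding P0_def by simp
  moreover have "\<forall>p\<in>P0. fst p < k0" unfolding P0_def by auto
  ultimately show ?thesis
    using greedy[OF _ _ order_refl c0 sp0, of "CARD('n)"] unfolding gg_def by auto
qed



lemma rank_full_rows_iff:
  fixes M :: "'a::field^'c^'r"
  shows "rank M = CARD('r) \<longleftrightarrow> (\<forall>c. (\<Sum>i\<in>UNIV. c i *s row i M) = 0 \<longrightarrow> (\<forall>i. c i = 0))"
proof
  assume rk: "rank M = CARD('r)"
  show "\<forall>c. (\<Sum>i\<in>UNIV. c i *s row i M) = 0 \<longrightarrow> (\<forall>i. c i = 0)"
  proof (intro allI impI)
    fix c i0 assume sum0: "(\<Sum>i\<in>UNIV. c i *s row i M) = 0"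
    show "c i0 = 0"
    proof (rule ccontr)
    assume ci0: "c i0 \<noteq> 0"
    define S where "S = (\<lambda>i. row i M) ` (UNIV - {i0})"
    have "(\<Sum>i\<in>UNIV. c i *s row i M) = c i0 *s row i0 M + (\<Sum>i\<in>UNIV - {i0}. c i *s row i M)"
      by (simp add: sum.remove[of UNIV i0])
    then have h: "c i0 *s row i0 M = - (\<Sum>i\<in>UNIV - {i0}. c i *s row i M)"
      using sum0 by (simp add: add_eq_0_iff2)
    have "row i0 M = inverse (c i0) *s (c i0 *s row i0 M)" using ci0 by (simp add: vector_smult_assoc)
    also have "\<dots> = inverse (c i0) *s (- (\<Sum>i\<in>UNIV - {i0}. c i *s row i M))" using h by simp
    also have "\<dots> = (\<Sum>i\<in>UNIV - {i0}. (- c i / c i0) *s row i M)"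
      by (simp add: vec.scale_sum_right vector_smult_assoc divide_inverse mult.commute sum_negf[symmetric])
    finally have eq: "row i0 M = (\<Sum>i\<in>UNIV - {i0}. (- c i / c i0) *s row i M)" .
    have "row i0 M \<in> vec.span S"
      unfolding eq S_def
      by (intro vec.span_sum vec.span_scale vec.span_base) auto
    moreover have "rows M = insert (row i0 M) S"
      unfolding S_def rows_def by auto
    ultimately have "vec.dim (rows M) = vec.dim S"
      by (simp add: vec.dim_insert)
    also have "\<dots> \<le> card S" by (rule vec.dim_le_card') (simp add: S_def)
    also have "\<dots> \<le> card (UNIV - {i0})" unfolding S_def by (rule card_image_le) simp
    also have "\<dots> < CARD('r)" by (simp add: card_Diff_subset)
    finally show False using rk unfolding row_rank_def_gen by simp
  qed
  qed
next
  assume ind: "\<forall>c. (\<Sum>i\<in>UNIV. c i *s row i M) = 0 \<longrightarrow> (\<forall>i. c i = 0)"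
  have inj: "inj (\<lambda>i. row i M)"
  proof (rule injI, rule ccontr)
    fix i j assume eqr: "row i M = row j M" and ij: "i \<noteq> j"
    define c where "c k = (if k = i then 1 else if k = j then -1 else (0::'a))" for k
    have "(\<Sum>k\<in>UNIV. c k *s row k M) = (\<Sum>k\<in>{i,j}. c k *s row k M)"
      by (rule sum.mono_neutral_right) (auto simp: c_def)
    also have "\<dots> = 0" using ij eqr by (simp add: c_def)
    finally have "c i = 0" using ind by blast
    then show False by (simp add: c_def)
  qed
  have rowsM: "rows M = range (\<lambda>i. row i M)" unfolding rows_def by auto
  have "vec.independent (rows M)"
  proof (rule vec.independent_if_scalars_zero)
    show "finite (rows M)" unfolding rowsM by simp
  next
    fix f x assume s0: "(\<Sum>x\<in>rows M. f x *s x) = 0" and x: "x \<in> rows M"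
    have "(\<Sum>i\<in>UNIV. f (row i M) *s row i M) = (\<Sum>x\<in>rows M. f x *s x)"
      unfolding rowsM by (rule sum.reindex[OF inj, unfolded o_def, symmetric])
    then have "\<forall>i. f (row i M) = 0" using ind s0 by auto
    then show "f x = 0" using x unfolding rowsM by auto
  qed
  then have "vec.dim (rows M) = card (rows M)" by (rule vec.dim_eq_card_independent)
  also have "\<dots> = CARD('r)" unfolding rowsM by (simp add: card_image[OF inj])
  finally show "rank M = CARD('r)" unfolding row_rank_def_gen .
qed

lemma pbh_comb:
  fixes D :: "real^'n^'n" and H :: "real^'l^'n"
  shows "(\<Sum>i\<in>UNIV. c i *s row i (pbh_matrix lam D H)) = 0 \<longleftrightarrow>
    (\<forall>j. (\<Sum>i\<in>UNIV. c i * complex_of_real (D$i$j)) = lam * c j) \<and>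
    (\<forall>j. (\<Sum>i\<in>UNIV. c i * complex_of_real (H$i$j)) = 0)"
proof -
  have compL: "(\<Sum>i\<in>UNIV. c i *s row i (pbh_matrix lam D H)) $ Inl j =
      lam * c j - (\<Sum>i\<in>UNIV. c i * complex_of_real (D$i$j))" for j
  proof -
    have e1: "(\<Sum>i\<in>UNIV. c i *s row i (pbh_matrix lam D H)) $ Inl j =
        (\<Sum>i\<in>UNIV. c i * ((if i = j then lam else 0) - complex_of_real (D$i$j)))"
      by (simp add: pbh_matrix_def row_def)
    have e2: "(\<Sum>i\<in>UNIV. c i * ((if i = j then lam else 0) - complex_of_real (D$i$j))) =
       (\<Sum>i\<in>UNIV. c i * (if i = j then lam else 0)) - (\<Sum>i\<in>UNIV. c i * complex_of_real (D$i$j))"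
      unfolding right_diff_distrib sum_subtractf ..
    have e3: "(\<Sum>i\<in>UNIV. c i * (if i = j then lam else 0)) = (\<Sum>i\<in>UNIV. (if i = j then c i * lam else 0))"
      by (rule sum.cong) auto
    have e4: "(\<Sum>i\<in>UNIV. (if i = j then c i * lam else 0)) = lam * c j"
      by (simp add: mult.commute)
    show ?thesis using e1 e2 e3 e4 by simp
  qed
  have compR: "(\<Sum>i\<in>UNIV. c i *s row i (pbh_matrix lam D H)) $ Inr j =
      (\<Sum>i\<in>UNIV. c i * complex_of_real (H$i$j))" for j
    by (simp add: pbh_matrix_def row_def)
  show ?thesis
  proof
    assume "(\<Sum>i\<in>UNIV. c i *s row i (pbh_matrix lam D H)) = 0"
    then have z: "\<And>k. (\<Sum>i\<in>UNIV. c i *s row i (pbh_matrix lam D H)) $ k = 0" by simp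
    show "(\<forall>j. (\<Sum>i\<in>UNIV. c i * complex_of_real (D$i$j)) = lam * c j) \<and>
      (\<forall>j. (\<Sum>i\<in>UNIV. c i * complex_of_real (H$i$j)) = 0)"
    proof (intro conjI allI)
      fix j
      have "lam * c j - (\<Sum>i\<in>UNIV. c i * complex_of_real (D$i$j)) = 0"
        using z[of "Inl j"] compL[of j] by simp
      then show "(\<Sum>i\<in>UNIV. c i * complex_of_real (D$i$j)) = lam * c j"
        unfolding right_minus_eq by simp
    next
      fix j
      show "(\<Sum>i\<in>UNIV. c i * complex_of_real (H$i$j)) = 0"
        using z[of "Inr j"] compR[of j] by simp
    qed
  next
    assume a: "(\<forall>j. (\<Sum>i\<in>UNIV. c i * complex_of_real (D$i$j)) = lam * c j) \<and>
      (\<forall>j. (\<Sum>i\<in>UNIV. c i * complex_of_real (H$i$j)) = 0)"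
    show "(\<Sum>i\<in>UNIV. c i *s row i (pbh_matrix lam D H)) = 0"
    proof (rule vec_eq_iff[THEN iffD2], rule allI)
      fix k :: "'n + 'l"
      show "(\<Sum>i\<in>UNIV. c i *s row i (pbh_matrix lam D H)) $ k = 0 $ k"
        using a compL compR by (cases k) auto
    qed
  qed
qed

definition cpair :: "complex^'n \<Rightarrow> real^'n \<Rightarrow> complex" where
  "cpair u x = (\<Sum>i\<in>UNIV. u$i * complex_of_real (x$i))"

lemma cpair_add_right: "cpair u (x + y) = cpair u x + cpair u y"
  by (simp add: cpair_def distrib_left sum.distrib)

lemma cpair_matrix:
  fixes D :: "real^'n^'n"
  shows "cpair u (D *v x) = (\<Sum>j\<in>UNIV. (\<Sum>i\<in>UNIV. u$i * complex_of_real (D$i$j)) * complex_of_real (x$j))"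
proof -
  have "cpair u (D *v x) = (\<Sum>i\<in>UNIV. \<Sum>j\<in>UNIV. u$i * complex_of_real (D$i$j) * complex_of_real (x$j))"
    by (simp add: cpair_def matrix_vector_mult_def sum_distrib_left mult.assoc)
  also have "\<dots> = (\<Sum>j\<in>UNIV. \<Sum>i\<in>UNIV. u$i * complex_of_real (D$i$j) * complex_of_real (x$j))"
    by (rule sum.swap)
  also have "\<dots> = (\<Sum>j\<in>UNIV. (\<Sum>i\<in>UNIV. u$i * complex_of_real (D$i$j)) * complex_of_real (x$j))"
    by (simp add: sum_distrib_right)
  finally show ?thesis .
qed

lemma cpair_matrix_H:
  fixes H :: "real^'l^'n"
  shows "cpair u (H *v x) = (\<Sum>j\<in>UNIV. (\<Sum>i\<in>UNIV. u$i * complex_of_real (H$i$j)) * complex_of_real (x$j))"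
proof -
  have "cpair u (H *v x) = (\<Sum>i\<in>UNIV. \<Sum>j\<in>UNIV. u$i * complex_of_real (H$i$j) * complex_of_real (x$j))"
    by (simp add: cpair_def matrix_vector_mult_def sum_distrib_left mult.assoc)
  also have "\<dots> = (\<Sum>j\<in>UNIV. \<Sum>i\<in>UNIV. u$i * complex_of_real (H$i$j) * complex_of_real (x$j))"
    by (rule sum.swap)
  also have "\<dots> = (\<Sum>j\<in>UNIV. (\<Sum>i\<in>UNIV. u$i * complex_of_real (H$i$j)) * complex_of_real (x$j))"
    by (simp add: sum_distrib_right)
  finally show ?thesis .
qed

lemma ctrl_imp_pbh:
  fixes D :: "real^'n^'n" and H :: "real^'l^'n"
  assumes ctrl: "s_sparse_controllable D H s"
  shows "rank (pbh_matrix lam D H) = CARD('n)"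
  unfolding rank_full_rows_iff
proof (intro allI impI)
  fix c i0 assume "(\<Sum>i\<in>UNIV. c i *s row i (pbh_matrix lam D H)) = 0"
  then have cD: "\<And>j. (\<Sum>i\<in>UNIV. c i * complex_of_real (D$i$j)) = lam * c j"
    and cH: "\<And>j. (\<Sum>i\<in>UNIV. c i * complex_of_real (H$i$j)) = 0"
    unfolding pbh_comb by auto
  let ?u = "(\<chi> i. c i) :: complex^'n"
  have pD: "cpair ?u (D *v x) = lam * cpair ?u x" for x
    unfolding cpair_matrix by (simp add: cD cpair_def sum_distrib_left mult.assoc)
  have pH: "cpair ?u (H *v y) = 0" for y
    by (simp add: cpair_matrix_H cH)
  have p0: "cpair ?u (sys_state D H 0 h k) = 0" for h k
    by (induction k) (simp_all add: cpair_add_right pD pH, simp add: cpair_def)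
  obtain K h where "sys_state D H 0 h K = axis i0 1"
    using ctrl unfolding s_sparse_controllable_def by blast
  then have "cpair ?u (axis i0 1) = 0" using p0 by metis
  moreover have "cpair ?u (axis i0 1) = c i0"
    by (simp add: cpair_def axis_def if_distrib cong: if_cong)
  ultimately show "c i0 = 0" by simp
qed

lemma ctrl_imp_dim:
  fixes D :: "real^'n^'n" and H :: "real^'l^'n"
  assumes ctrl: "s_sparse_controllable D H s"
  shows "CARD('n) \<le> s + rank D"
proof (rule ccontr)
  assume "\<not> CARD('n) \<le> s + rank D"
  then have lt: "s + rank D < CARD('n)" by simp
  define V where "V S = span (range (\<lambda>x. D *v x) \<union> (\<lambda>j. column j H) ` S)" for S :: "'l set"
  obtain B where B: "B \<subseteq> range (\<lambda>x. D *v x)" "independent B" "range (\<lambda>x. D *v x) \<subseteq> span B"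
     "card B = dim (range (\<lambda>x. D *v x))"
    using basis_exists by blast
  have cardB: "card B = rank D" using B(4) by (simp add: rank_dim_range)
  have finB: "finite B" using independent_bound B(2) by blast
  have dimV: "dim (V S) < CARD('n)" if "card S \<le> s" for S
  proof -
    have "range (\<lambda>x. D *v x) \<union> (\<lambda>j. column j H) ` S \<subseteq> span (B \<union> (\<lambda>j. column j H) ` S)"
    proof (rule Un_least)
      have "span B \<subseteq> span (B \<union> (\<lambda>j. column j H) ` S)" by (rule span_mono) simp
      then show "range (\<lambda>x. D *v x) \<subseteq> span (B \<union> (\<lambda>j. column j H) ` S)" using B(3) by (rule order_trans[rotated])
      show "(\<lambda>j. column j H) ` S \<subseteq> span (B \<union> (\<lambda>j. column j H) ` S)"
        using span_superset[of "B \<union> (\<lambda>j. column j H) ` S"] by (rule order_trans[rotated]) simp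
    qed
    then have "V S \<subseteq> span (B \<union> (\<lambda>j. column j H) ` S)"
      unfolding V_def using span_minimal subspace_span by blast
    then have "dim (V S) \<le> card (B \<union> (\<lambda>j. column j H) ` S)"
      by (rule dim_le_card) (simp add: finB)
    also have "\<dots> \<le> card B + card ((\<lambda>j. column j H) ` S)" by (rule card_Un_le)
    also have "\<dots> \<le> rank D + card S" using cardB card_image_le[of S] by simp
    finally show ?thesis using that lt by linarith
  qed
  have neg: "negligible (\<Union> (V ` {S. card S \<le> s}))"
  proof (rule negligible_Union)
    show "finite (V ` {S. card S \<le> s})" by simp
  next
    fix T assume "T \<in> V ` {S. card S \<le> s}"
    then obtain S where "card S \<le> s" "T = V S" by blast
    then show "negligible T" using dimV negligible_lowdim[of T] by simp
  qed
  have "x \<in> \<Union> (V ` {S. card S \<le> s})" for x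
  proof -
    obtain K h where Kh: "\<forall>k\<in>{1..K}. l0_norm (h k) \<le> s" "sys_state D H 0 h K = x"
      using ctrl unfolding s_sparse_controllable_def by blast
    show ?thesis
    proof (cases K)
      case 0
      then have "x = 0" using Kh by simp
      then have "x \<in> V {}" unfolding V_def by (simp add: span_zero)
      moreover have "{} \<in> {S. card S \<le> s}" by simp
      ultimately show ?thesis by blast
    next
      case (Suc K')
      define hv where "hv = h (Suc K')"
      define S where "S = {i. hv $ i \<noteq> 0}"
      have cS: "card S \<le> s" using Kh(1) Suc unfolding S_def hv_def l0_norm_def by auto
      have x: "x = D *v sys_state D H 0 h K' + H *v hv" using Kh(2) Suc hv_def by simp
      have "D *v sys_state D H 0 h K' \<in> V S" unfolding V_def by (intro span_base) blast
      moreover have "H *v hv \<in> V S"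
      proof -
        have "H *v hv = (\<Sum>j\<in>UNIV. hv $ j *\<^sub>R column j H)"
          by (simp add: matrix_mult_sum scalar_mult_eq_scaleR)
        also have "\<dots> \<in> V S" unfolding V_def
        proof (rule span_sum)
          fix j :: 'l
          show "hv $ j *\<^sub>R column j H \<in> span (range (\<lambda>x. D *v x) \<union> (\<lambda>j. column j H) ` S)"
          proof (cases "j \<in> S")
            case True then show ?thesis by (intro span_scale span_base) blast
          next
            case False then have "hv $ j = 0" unfolding S_def by simp
            then show ?thesis by (simp add: span_zero)
          qed
        qed
        finally show ?thesis .
      qed
      ultimately have "x \<in> V S" unfolding x V_def by (rule span_add)
      then show ?thesis using cS by blast
    qed
  qed
  then have "UNIV \<subseteq> \<Union> (V ` {S. card S \<le> s})" by blast
  then have "negligible (UNIV :: (real^'n) set)" using neg negligible_subset by blast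
  then show False by simp
qed



definition fD :: "real^'n^'n \<Rightarrow> complex^'n \<Rightarrow> complex^'n" where
  "fD D u = (\<chi> j. \<Sum>i\<in>UNIV. u$i * complex_of_real (D$i$j))"

lemma fD_add: "fD D (u + v) = fD D u + fD D v"
  by (simp add: fD_def vec_eq_iff distrib_right sum.distrib)

lemma fD_smult: "fD D (a *s u) = a *s fD D u"
  by (simp add: fD_def vec_eq_iff sum_distrib_left mult.assoc)

lemma fD_zero: "fD D 0 = 0"
  by (simp add: fD_def vec_eq_iff)

lemma fD_sum: "fD D (\<Sum>k\<in>A. F k) = (\<Sum>k\<in>A. fD D (F k))"
proof (induction A rule: infinite_finite_induct)
  case (infinite A) then show ?case by (simp add: fD_zero)
next
  case empty then show ?case by (simp add: fD_zero)
next
  case (insert x F) then show ?case by (simp add: fD_add)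
qed

lemma fDpow_add: "(fD D ^^ n) (u + v) = (fD D ^^ n) u + (fD D ^^ n) v"
  by (induction n) (simp_all add: fD_add)

lemma fDpow_smult: "(fD D ^^ n) (a *s u) = a *s (fD D ^^ n) u"
  by (induction n) (simp_all add: fD_smult)

lemma cpair_fD: "cpair (fD D u) x = cpair u (D *v x)"
  unfolding cpair_matrix by (simp add: cpair_def fD_def)

lemma cpair_fDpow: "cpair ((fD D ^^ n) u) x = cpair u (dp D n x)"
proof (induction n arbitrary: x)
  case 0 then show ?case by simp
next
  case (Suc n)
  have "cpair ((fD D ^^ Suc n) u) x = cpair ((fD D ^^ n) u) (D *v x)"
    by (simp add: cpair_fD)
  also have "\<dots> = cpair u (dp D n (D *v x))" by (rule Suc)
  also have "\<dots> = cpair u (dp D (Suc n) x)" by (simp add: dp_Suc')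
  finally show ?case .
qed

lemma cpair_add_left: "cpair (u + v) x = cpair u x + cpair v x"
  by (simp add: cpair_def distrib_right sum.distrib)

lemma cpair_smult_left: "cpair (a *s u) x = a * cpair u x"
  by (simp add: cpair_def sum_distrib_left mult.assoc)

lemma cpair_sum_left: "cpair (\<Sum>k\<in>A. F k) x = (\<Sum>k\<in>A. cpair (F k) x)"
proof (induction A rule: infinite_finite_induct)
  case (infinite A) then show ?case by (simp add: cpair_def)
next
  case empty then show ?case by (simp add: cpair_def)
next
  case (insert x F) then show ?case by (simp add: cpair_add_left)
qed

definition peval :: "real^'n^'n \<Rightarrow> complex poly \<Rightarrow> complex^'n \<Rightarrow> complex^'n" where
  "peval D p u = (\<Sum>i\<le>degree p. coeff p i *s (fD D ^^ i) u)"

lemma peval_bound: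
  assumes "degree p < n"
  shows "peval D p u = (\<Sum>i<n. coeff p i *s (fD D ^^ i) u)"
  unfolding peval_def
proof (rule sum.mono_neutral_left)
  show "finite {..<n}" by simp
  show "{..degree p} \<subseteq> {..<n}" using assms by auto
  show "\<forall>i\<in>{..<n} - {..degree p}. coeff p i *s (fD D ^^ i) u = 0"
    by (auto simp: coeff_eq_0)
qed

lemma peval_add: "peval D (p + q) u = peval D p u + peval D q u"
proof -
  define n where "n = Suc (max (degree p) (degree q))"
  have "degree (p + q) < n" unfolding n_def using degree_add_le_max[of p q] by simp
  moreover have "degree p < n" "degree q < n" unfolding n_def by auto
  ultimately show ?thesis
    by (simp add: peval_bound vector_sadd_rdistrib sum.distrib)
qed

lemma peval_smult: "peval D (smult a q) u = a *s peval D q u"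
proof -
  have "degree (smult a q) < Suc (degree q)" using degree_smult_le[of a q] by simp
  then show ?thesis
    by (simp add: peval_bound[of _ "Suc (degree q)"] vec.scale_sum_right vector_smult_assoc)
qed

lemma peval_pCons0: "peval D (pCons 0 q) u = fD D (peval D q u)"
proof -
  have d: "degree (pCons 0 q) < Suc (Suc (degree q))"
    by (metis degree_pCons_le le_imp_less_Suc)
  have "peval D (pCons 0 q) u = (\<Sum>i<Suc (Suc (degree q)). coeff (pCons 0 q) i *s (fD D ^^ i) u)"
    by (rule peval_bound[OF d])
  also have "\<dots> = (\<Sum>i<Suc (degree q). coeff q i *s (fD D ^^ Suc i) u)"
    unfolding sum.lessThan_Suc_shift by simp
  also have "\<dots> = fD D (\<Sum>i<Suc (degree q). coeff q i *s (fD D ^^ i) u)"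
    by (simp only: fD_sum fD_smult funpow.simps(2) o_apply)
  also have "\<dots> = fD D (peval D q u)" using peval_bound[of q "Suc (degree q)" D u] by simp
  finally show ?thesis .
qed

lemma peval_linfactor: "peval D ([:-mu, 1:] * q) u = fD D (peval D q u) - mu *s peval D q u"
proof -
  have eq: "[:-mu, 1:] * q = smult (-mu) q + pCons 0 q" by simp
  show ?thesis
    unfolding eq peval_add peval_smult peval_pCons0 by (simp add: vec_eq_iff)
qed

definition ann :: "real^'n^'n \<Rightarrow> real^'l^'n \<Rightarrow> complex^'n \<Rightarrow> bool" where
  "ann D H u \<longleftrightarrow> (\<forall>m j. cpair u (dp D m (column j H)) = 0)"

lemma ann_fDpow: "ann D H u \<Longrightarrow> ann D H ((fD D ^^ i) u)"
  unfolding ann_def cpair_fDpow by (simp add: dp_add[symmetric])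

lemma ann_peval: "ann D H u \<Longrightarrow> ann D H (peval D p u)"
  unfolding ann_def peval_def cpair_sum_left cpair_smult_left
  using ann_fDpow[of D H u, unfolded ann_def] by simp

lemma smult_eq_0_vec: "(a::complex) \<noteq> 0 \<Longrightarrow> a *s (u::complex^'n) = 0 \<Longrightarrow> u = 0"
  by (simp add: vec_eq_iff)

lemma eigen_exists:
  "degree p = d \<Longrightarrow> p \<noteq> 0 \<Longrightarrow> peval D p u = 0 \<Longrightarrow> u \<noteq> 0 \<Longrightarrow> ann D H u \<Longrightarrow>
   \<exists>w mu. w \<noteq> 0 \<and> ann D H w \<and> fD D w = mu *s w"
proof (induction d arbitrary: p)
  case 0
  then have "peval D p u = coeff p 0 *s u" by (simp add: peval_def)
  moreover have "coeff p 0 \<noteq> 0" using 0 leading_coeff_neq_0[of p] by simp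
  ultimately show ?case using 0 smult_eq_0_vec by metis
next
  case (Suc d)
  have "\<not> (\<exists>a l. a \<noteq> 0 \<and> l = 0 \<and> p = pCons a l)"
  proof
    assume "\<exists>a l. a \<noteq> 0 \<and> l = 0 \<and> p = pCons a l"
    then have "degree p = 0" by auto
    then show False using Suc.prems(1) by simp
  qed
  then obtain mu where "poly p mu = 0" using fundamental_theorem_of_algebra_alt by blast
  then have "[:-mu, 1:] dvd p" by (simp add: poly_eq_0_iff_dvd)
  then obtain q where pq: "p = [:-mu, 1:] * q" by (elim dvdE)
  have q0: "q \<noteq> 0" using pq Suc.prems(2) by auto
  have "degree p = 1 + degree q" unfolding pq by (subst degree_mult_eq) (use q0 in auto)
  then have dq: "degree q = d" using Suc.prems(1) by simp
  have ev: "fD D (peval D q u) - mu *s peval D q u = 0"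
    using Suc.prems(3) unfolding pq peval_linfactor .
  show ?case
  proof (cases "peval D q u = 0")
    case True
    show ?thesis using Suc.IH[OF dq q0 True Suc.prems(4,5)] by blast
  next
    case False
    have "fD D (peval D q u) = mu *s peval D q u" using ev by simp
    then show ?thesis using False ann_peval[OF Suc.prems(5)] by blast
  qed
qed

lemma chain_dep:
  fixes A :: "real^'n^'n" and v :: "real^'n"
  shows "\<exists>k c. ((*v) A ^^ k) v = (\<Sum>i<k. c i *\<^sub>R ((*v) A ^^ i) v)"
proof (rule ccontr)
  define w where "w i = ((*v) A ^^ i) v" for i
  assume "\<not> ?thesis"
  then have nin: "w k \<notin> span (w ` {..<k})" for k
    using span_param[of "{..<k}" "w k" w] unfolding w_def by auto
  have dk: "dim (w ` {..<k}) = k" for k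
  proof (induction k)
    case 0 then show ?case by simp
  next
    case (Suc k)
    have "w ` {..<Suc k} = insert (w k) (w ` {..<k})" by (simp add: lessThan_Suc)
    then show ?case using nin[of k] Suc by (simp add: dim_insert)
  qed
  have "dim (w ` {..<Suc CARD('n)}) \<le> CARD('n)" by (rule dim_subset_UNIV_cart)
  then show False using dk[of "Suc CARD('n)"] by simp
qed

definition cv :: "real^'n \<Rightarrow> complex^'n" where
  "cv x = (\<chi> i. complex_of_real (x$i))"

lemma fD_cv: "fD D (cv x) = cv (transpose D *v x)"
  by (simp add: fD_def cv_def vec_eq_iff matrix_vector_mult_def transpose_def mult.commute)

lemma fDpow_cv: "(fD D ^^ i) (cv x) = cv (((*v) (transpose D) ^^ i) x)"
  by (induction i) (simp_all add: fD_cv)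

lemma cv_sum_scale: "cv (\<Sum>i\<in>A. c i *\<^sub>R y i) = (\<Sum>i\<in>A. complex_of_real (c i) *s cv (y i))"
  by (simp add: cv_def vec_eq_iff)

lemma cv_diff: "cv (x - y) = cv x - cv y"
  by (simp add: cv_def vec_eq_iff)

lemma cv_eq0: "cv x = 0 \<longleftrightarrow> x = 0"
  by (simp add: cv_def vec_eq_iff)

lemma cpair_cv: "cpair (cv v) x = complex_of_real (v \<bullet> x)"
  by (simp add: cpair_def cv_def inner_vec_def)

lemma pbh_imp_kry:
  fixes D :: "real^'n^'n" and H :: "real^'l^'n"
  assumes pbh: "\<forall>lam. rank (pbh_matrix lam D H) = CARD('n)"
  shows "span {dp D m (column j H) | m j. True} = UNIV"
proof (rule ccontr)
  define G where "G = {dp D m (column j H) | m j. True}"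
  assume "span {dp D m (column j H) | m j. True} \<noteq> UNIV"
  then have "span G \<noteq> UNIV" unfolding G_def .
  then have "dim G \<noteq> DIM(real^'n)" using dim_eq_full by blast
  moreover have "dim G \<le> DIM(real^'n)" by (rule dim_subset_UNIV)
  ultimately have "dim G < DIM(real^'n)" by simp
  then obtain v :: "real^'n" where v: "v \<noteq> 0" "\<And>y. y \<in> span G \<Longrightarrow> orthogonal v y"
    using orthogonal_to_subspace_exists by blast
  have annv: "ann D H (cv v)"
    unfolding ann_def cpair_cv
  proof (intro allI)
    fix m j
    have "dp D m (column j H) \<in> span G" unfolding G_def by (intro span_base) blast
    then show "complex_of_real (v \<bullet> dp D m (column j H)) = 0"
      using v(2) unfolding orthogonal_def by simp
  qed
  define w where "w i = ((*v) (transpose D) ^^ i) v" for i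
  obtain k c where kc: "w k = (\<Sum>i<k. c i *\<^sub>R w i)"
    using chain_dep[of "transpose D" v] unfolding w_def by blast
  define p where "p = monom 1 k - (\<Sum>i<k. monom (complex_of_real (c i)) i)"
  have coeffp: "coeff p j = (if j = k then 1 else 0) - (if j < k then complex_of_real (c j) else 0)" for j
  proof -
    have "coeff (\<Sum>i<k. monom (complex_of_real (c i)) i) j = (\<Sum>i<k. if i = j then complex_of_real (c i) else 0)"
      by (simp add: coeff_sum coeff_monom)
    also have "\<dots> = (if j < k then complex_of_real (c j) else 0)"
      by (simp add: sum.delta)
    finally show ?thesis unfolding p_def by (simp add: coeff_monom)
  qed
  have degp: "degree p < Suc k"
    using degree_le[of k p] coeffp by (simp add: le_imp_less_Suc)
  have p0: "p \<noteq> 0"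
  proof
    assume "p = 0"
    then have "coeff p k = 0" by simp
    then show False using coeffp[of k] by simp
  qed
  have "peval D p (cv v) = (\<Sum>i<Suc k. coeff p i *s (fD D ^^ i) (cv v))"
    by (rule peval_bound[OF degp])
  also have "\<dots> = (\<Sum>i<k. coeff p i *s (fD D ^^ i) (cv v)) + coeff p k *s (fD D ^^ k) (cv v)"
    by simp
  also have "(\<Sum>i<k. coeff p i *s (fD D ^^ i) (cv v)) = (\<Sum>i<k. (- complex_of_real (c i)) *s cv (w i))"
    by (rule sum.cong) (simp_all add: coeffp fDpow_cv w_def)
  also have "\<dots> = - (\<Sum>i<k. complex_of_real (c i) *s cv (w i))"
    by (simp add: sum_negf[symmetric] vec_eq_iff)
  also have "\<dots> = - cv (w k)"
    unfolding kc cv_sum_scale ..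
  also have "coeff p k *s (fD D ^^ k) (cv v) = cv (w k)"
    by (simp add: coeffp fDpow_cv w_def)
  finally have pev: "peval D p (cv v) = 0" by simp
  have "cv v \<noteq> 0" using v(1) cv_eq0 by blast
  then obtain w' mu where w': "w' \<noteq> 0" "ann D H w'" "fD D w' = mu *s w'"
    using eigen_exists[OF refl p0 pev _ annv] by blast
  have "(\<Sum>i\<in>UNIV. w' $ i *s row i (pbh_matrix mu D H)) = 0"
    unfolding pbh_comb
  proof (intro conjI allI)
    fix j
    show "(\<Sum>i\<in>UNIV. w' $ i * complex_of_real (D $ i $ j)) = mu * w' $ j"
      using w'(3) by (simp add: fD_def vec_eq_iff)
  next
    fix j
    have "cpair w' (dp D 0 (column j H)) = 0" using w'(2) unfolding ann_def by blast
    then show "(\<Sum>i\<in>UNIV. w' $ i * complex_of_real (H $ i $ j)) = 0"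
      by (simp add: cpair_def column_def)
  qed
  then have "\<forall>i. w' $ i = 0" using pbh rank_full_rows_iff by blast
  then have "w' = 0" by (simp add: vec_eq_iff)
  then show False using w'(1) by simp
qed


theorem theorem1:
  fixes D :: "real^'n^'n" and H :: "real^'l^'n" and s :: nat
  assumes "1 \<le> s" and "s \<le> CARD('l)"
  shows "s_sparse_controllable D H s \<longleftrightarrow>
           ((\<forall>lam::complex. rank (pbh_matrix lam D H) = CARD('n)) \<and>
            CARD('n) \<le> s + rank D)"
proof
  assume ctrl: "s_sparse_controllable D H s"
  show "(\<forall>lam::complex. rank (pbh_matrix lam D H) = CARD('n)) \<and> CARD('n) \<le> s + rank D"
    using ctrl_imp_pbh[OF ctrl] ctrl_imp_dim[OF ctrl] by blast
next
  assume a: "(\<forall>lam::complex. rank (pbh_matrix lam D H) = CARD('n)) \<and> CARD('n) \<le> s + rank D"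
  have kry: "span {dp D m (column j H) | m j. True} = UNIV"
    using pbh_imp_kry a by blast
  obtain P where "finite P" "\<forall>m. card {j. (m,j) \<in> P} \<le> s"
      "span ((\<lambda>(m,j). dp D m (column j H)) ` P) = UNIV"
    using plan_exists[OF kry assms(1)] a by blast
  then show "s_sparse_controllable D H s" by (rule plan_controllable)
qed

end
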